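(* Let $\mathbf{u}$ be quasi-definite with SMOP $(P_n)_{n\ge0}$ satisfying $xP_n=P_{n+1}+b_nP_n+a_nP_{n-1}$, let $c\in\mathbb{C}$, and let $\widehat{\mathbf{u}}$ be a quasi-definite linear functional with $\mathbf{u}=(x-c)^2\widehat{\mathbf{u}}$ and SMOP $(Q_n)_{n\ge0}$. Write $Q_n=P_n+\sum_{m=0}^{n-1}\alpha_{n,m}P_m$ (then $\alpha_{n,m}=0$ for $m\le n-3$ and $\alpha_{n,n-2}\ne0$ for $n\ge2$), with the convention $\alpha_{0,-1}=0$. Then $(Q_n)$ satisfies $xQ_n=Q_{n+1}+\widehat b_nQ_n+\widehat a_nQ_{n-1}$, $Q_{-1}=0$, $Q_0=1$, where $$\widehat b_n=b_n+\alpha_{n,n-1}-\alpha_{n+1,n}\ (n\ge0),\qquad \widehat a_n=\frac{\alpha_{n,n-2}}{\alpha_{n-1,n-3}}\,a_{n-2}\ (n\ge3),$$ $$\widehat a_2=\frac{\mathbf{u}_0\widehat{\mathbf{u}}_0\,\alpha_{2,0}}{\mathbf{u}_0\widehat{\mathbf{u}}_0-(\widehat{\mathbf{u}}_1-c\widehat{\mathbf{u}}_0)^2},\qquad \widehat a_1=\frac{\mathbf{u}_0\widehat{\mathbf{u}}_0-(\widehat{\mathbf{u}}_1-c\widehat{\mathbf{u}}_0)^2}{\widehat{\mathbf{u}}_0^2}.$$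
   Context: Linear functionals on complex polynomials, moments $\mathbf{u}_n=\langle\mathbf{u},x^n\rangle$, $\langle(x-c)^2\widehat{\mathbf{u}},p\rangle=\langle\widehat{\mathbf{u}},(x-c)^2p\rangle$. Quasi-definite: all leading principal submatrices of the Hankel moment matrix are nonsingular; then there is a unique sequence of monic orthogonal polynomials (SMOP) $(P_n)$, $\deg P_n=n$, $\langle\mathbf{u},P_nP_m\rangle=K_n\delta_{nm}$, $K_n\neq0$, satisfying a three-term recurrence $xP_n=P_{n+1}+b_nP_n+a_nP_{n-1}$, $P_{-1}=0,P_0=1$, $a_n\ne0$. *)

theory Defs
  imports "HOL-Computational_Algebra.Polynomial" "Jordan_Normal_Form.Determinant"
begin

text \<open>A linear functional on complex polynomials is represented by its moment
sequence; its action on a polynomial p is the sum of coeff p i times the i-th moment.\<close>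
definition lf :: "(nat \<Rightarrow> complex) \<Rightarrow> complex poly \<Rightarrow> complex" where
  "lf u p = (\<Sum>i\<le>degree p. coeff p i * u i)"

definition hankel :: "(nat \<Rightarrow> complex) \<Rightarrow> nat \<Rightarrow> complex mat" where
  "hankel u n = mat (Suc n) (Suc n) (\<lambda>(i, j). u (i + j))"

definition quasi_definite :: "(nat \<Rightarrow> complex) \<Rightarrow> bool" where
  "quasi_definite u \<longleftrightarrow> (\<forall>n. det (hankel u n) \<noteq> 0)"

definition is_SMOP :: "(nat \<Rightarrow> complex) \<Rightarrow> (nat \<Rightarrow> complex poly) \<Rightarrow> bool" where
  "is_SMOP u P \<longleftrightarrow>
     (\<forall>n. degree (P n) = n \<and> lead_coeff (P n) = 1) \<and>
     (\<forall>n m. n \<noteq> m \<longrightarrow> lf u (P n * P m) = 0) \<and>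
     (\<forall>n. lf u (P n * P n) \<noteq> 0)"

end

theory Submission imports Defs begin

lemma lf_eq:
  assumes "degree p \<le> N"
  shows "lf w p = (\<Sum>i\<le>N. coeff p i * w i)"
  unfolding lf_def
  by (rule sum.mono_neutral_left) (use assms in \<open>auto simp: coeff_eq_0\<close>)

lemma lf_add: "lf w (p + q) = lf w p + lf w q"
proof -
  let ?N = "max (degree p) (degree q)"
  have "degree (p + q) \<le> ?N" by (rule degree_add_le) auto
  then show ?thesis
    by (simp add: lf_eq[of _ ?N] lf_eq[of p ?N] lf_eq[of q ?N] sum.distrib algebra_simps)
qed

lemma lf_smult: "lf w (smult a p) = a * lf w p"
  by (simp add: lf_eq[of "smult a p" "degree p"] lf_eq[of p "degree p"] sum_distrib_left algebra_simps)

lemma lf_0[simp]: "lf w 0 = 0" by (simp add: lf_def)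

lemma lf_minus: "lf w (- p) = - lf w p"
  using lf_smult[of w "-1" p] by simp

lemma lf_diff: "lf w (p - q) = lf w p - lf w q"
  using lf_add[of w p "-q"] lf_minus[of w q] by simp

lemma lf_sum: "lf w (\<Sum>k\<in>A. f k) = (\<Sum>k\<in>A. lf w (f k))"
  by (induction A rule: infinite_finite_induct) (auto simp: lf_add)

lemma lf_pCons: "lf w (pCons a p) = a * w 0 + lf (\<lambda>i. w (Suc i)) p"
proof -
  have "degree (pCons a p) \<le> Suc (degree p)" by (simp add: degree_pCons_le)
  then have "lf w (pCons a p) = (\<Sum>i\<le>Suc (degree p). coeff (pCons a p) i * w i)"
    by (rule lf_eq)
  also have "\<dots> = a * w 0 + (\<Sum>i\<le>degree p. coeff p i * w (Suc i))"
    by (subst sum.atMost_Suc_shift) simp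
  finally show ?thesis by (simp add: lf_def)
qed

lemma lf_1: "lf w 1 = w 0"
  by (simp add: lf_def)

lemma deg0_monic: "degree p = 0 \<Longrightarrow> lead_coeff p = 1 \<Longrightarrow> p = 1"
  by (metis degree_0_id one_pCons)

lemma span:
  fixes R :: "nat \<Rightarrow> complex poly"
  assumes R: "\<forall>n. degree (R n) = n \<and> lead_coeff (R n) = 1"
  shows "degree p \<le> n \<Longrightarrow> \<exists>c. p = (\<Sum>k\<le>n. smult (c k) (R k))"
proof (induction n arbitrary: p)
  case 0
  then have "R 0 = 1" using R deg0_monic by blast
  moreover have "p = [:coeff p 0:]" using 0 by (simp add: degree_0_id)
  ultimately show ?case by (intro exI[of _ "\<lambda>_. coeff p 0"]) (simp add: one_pCons)
next
  case (Suc n)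
  define r where "r = p - smult (coeff p (Suc n)) (R (Suc n))"
  have "degree r \<le> n"
  proof (rule degree_le, intro allI impI)
    fix i assume "n < i"
    show "coeff r i = 0"
    proof (cases "i = Suc n")
      case True
      have "coeff (R (Suc n)) (Suc n) = 1" using R by metis
      then show ?thesis using True by (simp add: r_def)
    next
      case False
      then have "i > Suc n" using \<open>n < i\<close> by simp
      then show ?thesis using R Suc.prems by (simp add: r_def coeff_eq_0)
    qed
  qed
  from Suc.IH[OF this] obtain c where c: "r = (\<Sum>k\<le>n. smult (c k) (R k))" by blast
  show ?case
    by (intro exI[of _ "c(Suc n := coeff p (Suc n))"])
       (simp add: c[unfolded r_def, symmetric] r_def)
qed

lemma smop_deg: "is_SMOP w R \<Longrightarrow> degree (R n) = n" unfolding is_SMOP_def by blast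
lemma smop_lc: "is_SMOP w R \<Longrightarrow> lead_coeff (R n) = 1" unfolding is_SMOP_def by blast
lemma smop_orth: "is_SMOP w R \<Longrightarrow> n \<noteq> m \<Longrightarrow> lf w (R n * R m) = 0" unfolding is_SMOP_def by blast
lemma smop_K: "is_SMOP w R \<Longrightarrow> lf w (R n * R n) \<noteq> 0" unfolding is_SMOP_def by blast

lemma lf_orth_low:
  assumes S: "is_SMOP w R" and d: "degree q < n"
  shows "lf w (R n * q) = 0"
proof -
  obtain m where n: "n = Suc m" using d by (cases n) auto
  have R: "\<forall>n. degree (R n) = n \<and> lead_coeff (R n) = 1" using S unfolding is_SMOP_def by blast
  obtain c where c: "q = (\<Sum>k\<le>m. smult (c k) (R k))" using span[OF R, of q m] d n by auto
  have "R n * q = (\<Sum>k\<le>m. smult (c k) (R n * R k))"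
    by (simp add: c sum_distrib_left mult_smult_right)
  then have "lf w (R n * q) = (\<Sum>k\<le>m. c k * lf w (R n * R k))"
    by (simp add: lf_sum lf_smult)
  also have "\<dots> = 0" using smop_orth[OF S] n by (intro sum.neutral) auto
  finally show ?thesis .
qed

lemma fourier:
  assumes S: "is_SMOP w R" and d: "degree r \<le> n"
  shows "r = (\<Sum>k\<le>n. smult (lf w (r * R k) / lf w (R k * R k)) (R k))"
proof -
  have R: "\<forall>n. degree (R n) = n \<and> lead_coeff (R n) = 1" using S unfolding is_SMOP_def by blast
  obtain c where c: "r = (\<Sum>k\<le>n. smult (c k) (R k))" using span[OF R d] by auto
  have "c j = lf w (r * R j) / lf w (R j * R j)" if j: "j \<le> n" for j
  proof -
    have "r * R j = (\<Sum>k\<le>n. smult (c k) (R k * R j))"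
      by (simp add: c sum_distrib_right)
    then have "lf w (r * R j) = (\<Sum>k\<le>n. c k * lf w (R k * R j))"
      by (simp add: lf_sum lf_smult)
    also have "\<dots> = (\<Sum>k\<le>n. if k = j then c j * lf w (R j * R j) else 0)"
      using smop_orth[OF S] by (intro sum.cong) auto
    also have "\<dots> = c j * lf w (R j * R j)" using j by simp
    finally show ?thesis using smop_K[OF S, of j] by simp
  qed
  then show ?thesis by (subst c) (intro sum.cong; simp)
qed

lemma lf_monic:
  assumes S: "is_SMOP w R" and d: "degree p = n" and l: "lead_coeff p = 1"
  shows "lf w (R n * p) = lf w (R n * R n)"
proof -
  have "lf w (R n * (p - R n)) = 0"
  proof (cases "p - R n = 0")
    case True then show ?thesis by simp
  next
    case False
    have le: "degree (p - R n) \<le> n"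
      using degree_diff_le[of p n "R n"] d smop_deg[OF S] by simp
    have "coeff (p - R n) n = 0" using d l smop_deg[OF S, of n] smop_lc[OF S, of n] by simp
    then have "degree (p - R n) \<noteq> n" using False by (metis leading_coeff_0_iff)
    then show ?thesis using le by (intro lf_orth_low[OF S]) simp
  qed
  then show ?thesis by (simp add: right_diff_distrib lf_diff)
qed

theorem mainTheorem4:
  fixes u uh :: "nat \<Rightarrow> complex" and P Q :: "nat \<Rightarrow> complex poly"
    and a b :: "nat \<Rightarrow> complex" and c :: complex and \<alpha> :: "nat \<Rightarrow> nat \<Rightarrow> complex"
  assumes qd_u: "quasi_definite u" and smop_P: "is_SMOP u P"
    and rec_P: "\<forall>n. [:0, 1:] * P n = P (Suc n) + smult (b n) (P n)
                       + (if n = 0 then 0 else smult (a n) (P (n - 1)))"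
    and a_nz: "\<forall>n\<ge>1. a n \<noteq> 0"
    and qd_uh: "quasi_definite uh" and smop_Q: "is_SMOP uh Q"
    and rel: "\<forall>p. lf u p = lf uh ([:- c, 1:] ^ 2 * p)"
    and expan: "\<forall>n. Q n = P n + (\<Sum>m<n. smult (\<alpha> n m) (P m))"
  shows "(\<forall>n m. m + 3 \<le> n \<longrightarrow> \<alpha> n m = 0) \<and> (\<forall>n\<ge>2. \<alpha> n (n - 2) \<noteq> 0) \<and>
    (\<exists>ah bh. (\<forall>n. [:0, 1:] * Q n = Q (Suc n) + smult (bh n) (Q n)
                     + (if n = 0 then 0 else smult (ah n) (Q (n - 1))))
       \<and> (\<forall>n. bh n = b n + (if n = 0 then 0 else \<alpha> n (n - 1)) - \<alpha> (Suc n) n)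
       \<and> (\<forall>n\<ge>3. ah n = \<alpha> n (n - 2) / \<alpha> (n - 1) (n - 3) * a (n - 2))
       \<and> ah 2 = u 0 * uh 0 * \<alpha> 2 0 / (u 0 * uh 0 - (uh 1 - c * uh 0) ^ 2)
       \<and> ah 1 = (u 0 * uh 0 - (uh 1 - c * uh 0) ^ 2) / (uh 0) ^ 2)"
proof -
  let ?X = "[:0, 1:] :: complex poly"
  define D where "D = [:- c, 1:] ^ 2"
  define K where "K n = lf u (P n * P n)" for n
  define Kh where "Kh n = lf uh (Q n * Q n)" for n
  have degP: "degree (P n) = n" for n using smop_deg[OF smop_P] .
  have lcP: "lead_coeff (P n) = 1" for n using smop_lc[OF smop_P] .
  have degQ: "degree (Q n) = n" for n using smop_deg[OF smop_Q] .
  have lcQ: "lead_coeff (Q n) = 1" for n using smop_lc[OF smop_Q] .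
  have KnzP: "K n \<noteq> 0" for n using smop_K[OF smop_P] K_def by simp
  have KnzQ: "Kh n \<noteq> 0" for n using smop_K[OF smop_Q] Kh_def by simp
  have Pnz: "P n \<noteq> 0" for n using lcP[of n] by auto
  have Qnz: "Q n \<noteq> 0" for n using lcQ[of n] by auto
  have P0: "P 0 = 1" using deg0_monic degP lcP by blast
  have Q0: "Q 0 = 1" using deg0_monic degQ lcQ by blast
  have Xmul: "?X * p = pCons 0 p" for p by simp
  have degX: "degree (?X * p) = Suc (degree p)" if "p \<noteq> 0" for p
    using that by (simp add: Xmul)
  have lcX: "lead_coeff (?X * p) = lead_coeff p" if "p \<noteq> 0" for p
    using that by (simp add: Xmul)
  have degD: "degree D = 2" unfolding D_def using degree_linear_power[of "-c" 2] by simp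
  have lcD: "lead_coeff D = 1" by (simp add: D_def lead_coeff_power)
  have Dnz: "D \<noteq> 0" using lcD by auto
  have rel': "lf u p = lf uh (D * p)" for p using rel D_def by simp
  have F1: "lf u (P j * Q n) = \<alpha> n j * K j" if "j < n" for j n
  proof -
    have "P j * Q n = P j * P n + (\<Sum>m<n. smult (\<alpha> n m) (P j * P m))"
      by (simp add: expan[rule_format, of n] distrib_left sum_distrib_left mult_smult_right)
    then have "lf u (P j * Q n) = lf u (P j * P n) + (\<Sum>m<n. \<alpha> n m * lf u (P j * P m))"
      by (simp add: lf_add lf_sum lf_smult)
    also have "(\<Sum>m<n. \<alpha> n m * lf u (P j * P m)) = (\<Sum>m<n. if m = j then \<alpha> n j * K j else 0)"
      using smop_orth[OF smop_P] by (intro sum.cong) (auto simp: K_def)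
    also have "\<dots> = \<alpha> n j * K j" using that by simp
    finally show ?thesis using smop_orth[OF smop_P, of j n] that by simp
  qed
  have F2: "lf u (P j * Q n) = lf uh (Q n * (D * P j))" for j n
    by (simp add: rel' mult_ac)
  have degDP: "degree (D * P j) = j + 2" for j
    using degree_mult_eq[OF Dnz Pnz[of j]] degD degP by simp
  have lcDP: "lead_coeff (D * P j) = 1" for j by (simp add: lead_coeff_mult lcD lcP)
  have A0: "\<alpha> n m = 0" if "m + 3 \<le> n" for n m
  proof -
    have "lf u (P m * Q n) = 0" unfolding F2
      by (rule lf_orth_low[OF smop_Q]) (use that degDP in simp)
    then show ?thesis using F1[of m n] that KnzP[of m] by simp
  qed
  have Kh2: "Kh n = \<alpha> n (n-2) * K (n-2)" if "n \<ge> 2" for n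
  proof -
    have "Kh n = lf uh (Q n * (D * P (n-2)))" unfolding Kh_def
      using that degDP lcDP by (intro lf_monic[OF smop_Q, symmetric]) auto
    also have "\<dots> = lf u (P (n-2) * Q n)" using F2 by simp
    also have "\<dots> = \<alpha> n (n-2) * K (n-2)" using that by (intro F1) simp
    finally show ?thesis .
  qed
  have A2: "\<alpha> n (n-2) \<noteq> 0" if "n \<ge> 2" for n using Kh2[OF that] KnzQ[of n] by auto
  have aK: "a m * K (m-1) = K m" if "m \<ge> 1" for m
  proof -
    have e: "?X * P m * P (m-1) = P (Suc m) * P (m-1) + smult (b m) (P m * P (m-1))
        + smult (a m) (P (m-1) * P (m-1))"
      using rec_P[rule_format, of m] that by (simp add: distrib_right mult_smult_left del: mult_pCons_left)
    have "lf u (?X * P m * P (m-1)) = a m * K (m-1)"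
      unfolding e using smop_orth[OF smop_P, of "Suc m" "m-1"] smop_orth[OF smop_P, of m "m-1"] that
      by (simp add: lf_add lf_smult K_def)
    moreover have "lf u (?X * P m * P (m-1)) = K m"
    proof -
      have "lf u (?X * P m * P (m-1)) = lf u (P m * (?X * P (m-1)))" by (simp add: mult_ac)
      also have "\<dots> = K m" unfolding K_def
        using that degX[OF Pnz[of "m-1"]] lcX[OF Pnz[of "m-1"]] degP lcP
        by (intro lf_monic[OF smop_P]) auto
      finally show ?thesis .
    qed
    ultimately show ?thesis by simp
  qed
  define d where "d n k = lf uh ((?X * Q n - Q (Suc n)) * Q k) / Kh k" for n k
  define bh where "bh n = d n n" for n
  define ah where "ah n = d n (n - 1)" for n
  have degr: "degree (?X * Q n - Q (Suc n)) \<le> n" for n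
  proof (rule degree_le, intro allI impI)
    fix i assume "n < i"
    show "coeff (?X * Q n - Q (Suc n)) i = 0"
    proof (cases "i = Suc n")
      case True
      have "coeff (Q n) n = 1" "coeff (Q (Suc n)) (Suc n) = 1" using lcQ degQ by metis+
      then show ?thesis using True by (simp add: Xmul)
    next
      case False
      then obtain j where j: "i = Suc j" "j > n" using \<open>n < i\<close> by (cases i) auto
      then show ?thesis using degQ by (simp add: Xmul coeff_eq_0)
    qed
  qed
  have dz: "lf uh ((?X * Q n - Q (Suc n)) * Q k) = 0" if "k + 1 < n" for n k
  proof -
    have "lf uh ((?X * Q n - Q (Suc n)) * Q k) = lf uh (Q n * (?X * Q k)) - lf uh (Q (Suc n) * Q k)"
      by (metis (no_types, lifting) lf_diff left_diff_distrib mult.commute mult.left_commute)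
    also have "lf uh (Q n * (?X * Q k)) = 0"
      using that degX[OF Qnz[of k]] degQ by (intro lf_orth_low[OF smop_Q]) simp
    also have "lf uh (Q (Suc n) * Q k) = 0" using that smop_orth[OF smop_Q] by simp
    finally show ?thesis by simp
  qed
  have dn1: "lf uh ((?X * Q n - Q (Suc n)) * Q (n-1)) = Kh n" if "n \<ge> 1" for n
  proof -
    have "lf uh ((?X * Q n - Q (Suc n)) * Q (n-1)) = lf uh (Q n * (?X * Q (n-1))) - lf uh (Q (Suc n) * Q (n-1))"
      by (metis (no_types, lifting) lf_diff left_diff_distrib mult.commute mult.left_commute)
    also have "lf uh (Q n * (?X * Q (n-1))) = Kh n" unfolding Kh_def
      using that degX[OF Qnz[of "n-1"]] lcX[OF Qnz[of "n-1"]] degQ lcQ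
      by (intro lf_monic[OF smop_Q]) auto
    also have "lf uh (Q (Suc n) * Q (n-1)) = 0" using that smop_orth[OF smop_Q] by simp
    finally show ?thesis by simp
  qed
  have ahK: "ah n = Kh n / Kh (n-1)" if "n \<ge> 1" for n
    using dn1[OF that] by (simp add: ah_def d_def)
  have recQ: "?X * Q n = Q (Suc n) + smult (bh n) (Q n) + (if n = 0 then 0 else smult (ah n) (Q (n-1)))" for n
  proof -
    have e: "?X * Q n - Q (Suc n) = (\<Sum>k\<le>n. smult (d n k) (Q k))"
      unfolding d_def Kh_def by (rule fourier[OF smop_Q degr])
    then have e': "?X * Q n = Q (Suc n) + (\<Sum>k\<le>n. smult (d n k) (Q k))"
      by (metis diff_add_cancel add.commute)
    show ?thesis
    proof (cases n)
      case 0 then show ?thesis using e' by (simp add: bh_def del: mult_pCons_left)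
    next
      case (Suc m)
      have z: "(\<Sum>k<m. smult (d n k) (Q k)) = 0"
        using dz Suc by (intro sum.neutral) (auto simp: d_def)
      have "(\<Sum>k\<le>n. smult (d n k) (Q k)) = (\<Sum>k<m. smult (d n k) (Q k)) + smult (d n m) (Q m) + smult (d n n) (Q n)"
        using Suc by (simp add: lessThan_Suc_atMost[symmetric] del: lessThan_Suc_atMost)
      then show ?thesis using e' z Suc by (simp add: bh_def ah_def algebra_simps del: mult_pCons_left)
    qed
  qed
  have cX: "coeff (?X * p) n = (if n = 0 then 0 else coeff p (n - 1))" for p n
    by (cases n) (simp_all add: Xmul)
  have cQ: "coeff (Q (Suc k)) k = coeff (P (Suc k)) k + \<alpha> (Suc k) k" for k
  proof -
    have "coeff (Q (Suc k)) k = coeff (P (Suc k)) k + (\<Sum>m<Suc k. \<alpha> (Suc k) m * coeff (P m) k)"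
      by (simp add: expan[rule_format, of "Suc k"] coeff_sum del: sum.lessThan_Suc)
    also have "(\<Sum>m<Suc k. \<alpha> (Suc k) m * coeff (P m) k) = \<alpha> (Suc k) k"
    proof -
      have "(\<Sum>m<k. \<alpha> (Suc k) m * coeff (P m) k) = 0"
        using degP by (intro sum.neutral) (auto simp: coeff_eq_0)
      moreover have "coeff (P k) k = 1" using degP lcP by metis
      ultimately show ?thesis by simp
    qed
    finally show ?thesis .
  qed
  have bhc: "bh n = coeff (?X * Q n) n - coeff (Q (Suc n)) n" for n
  proof -
    have "coeff (?X * Q n) n = coeff (Q (Suc n)) n + bh n"
    proof (cases n)
      case 0 then show ?thesis using arg_cong[OF recQ[of n], of "\<lambda>p. coeff p n"] Q0
        by (simp del: mult_pCons_left)
    next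
      case (Suc m)
      have "coeff (Q m) (Suc m) = 0" using degQ by (simp add: coeff_eq_0)
      moreover have "coeff (Q (Suc m)) (Suc m) = 1" using degQ lcQ by metis
      ultimately show ?thesis using arg_cong[OF recQ[of n], of "\<lambda>p. coeff p n"] Suc
        by (simp del: mult_pCons_left)
    qed
    then show ?thesis by simp
  qed
  have bc: "b n = coeff (?X * P n) n - coeff (P (Suc n)) n" for n
  proof -
    have "coeff (?X * P n) n = coeff (P (Suc n)) n + b n"
    proof (cases n)
      case 0 then show ?thesis using arg_cong[OF rec_P[rule_format, of n], of "\<lambda>p. coeff p n"] P0
        by (simp del: mult_pCons_left)
    next
      case (Suc m)
      have "coeff (P m) (Suc m) = 0" using degP by (simp add: coeff_eq_0)
      moreover have "coeff (P (Suc m)) (Suc m) = 1" using degP lcP by metis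
      ultimately show ?thesis using arg_cong[OF rec_P[rule_format, of n], of "\<lambda>p. coeff p n"] Suc
        by (simp del: mult_pCons_left)
    qed
    then show ?thesis by simp
  qed
  have BH: "bh n = b n + (if n = 0 then 0 else \<alpha> n (n - 1)) - \<alpha> (Suc n) n" for n
    unfolding bhc bc cX cQ by (cases n) (simp_all add: cQ)
  have AH3: "ah n = \<alpha> n (n - 2) / \<alpha> (n - 1) (n - 3) * a (n - 2)" if "n \<ge> 3" for n
  proof -
    have k1: "Kh (n-1) = \<alpha> (n-1) (n-3) * K (n-3)" using Kh2[of "n-1"] that
      by (simp add: numeral_eq_Suc)
    have k2: "K (n-2) = a (n-2) * K (n-3)" using aK[of "n-2"] that
      by (simp add: numeral_eq_Suc)
    have nz: "\<alpha> (n-1) (n-3) \<noteq> 0" using A2[of "n-1"] that by (simp add: numeral_eq_Suc)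
    show ?thesis using that ahK[of n] Kh2[of n] k1 k2 nz KnzP[of "n-3"] by (simp add: field_simps)
  qed
  have Q1: "Q 1 = [:coeff (Q 1) 0, 1:]"
  proof (rule poly_eqI)
    fix i
    show "coeff (Q 1) i = coeff [:coeff (Q 1) 0, 1:] i"
    proof (cases i)
      case 0 then show ?thesis by simp
    next
      case (Suc j)
      show ?thesis
      proof (cases j)
        case 0 then show ?thesis using Suc degQ[of 1] lcQ[of 1] by simp
      next
        case (Suc k) then show ?thesis using \<open>i = Suc j\<close> degQ[of 1] by (simp add: coeff_eq_0)
      qed
    qed
  qed
  define q where "q = coeff (Q 1) 0"
  have orth1: "q * uh 0 + uh 1 = 0"
  proof -
    have "lf uh (Q 1) = 0" using smop_orth[OF smop_Q, of 1 0] Q0 by simp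
    then have "lf uh [:q, 1:] = 0" using Q1 unfolding q_def by simp
    then show ?thesis by (simp add: lf_pCons)
  qed
  have Kh1: "Kh 1 = q * uh 1 + uh 2"
  proof -
    have "Kh 1 = lf uh (Q 1 * (?X * Q 0))" unfolding Kh_def
      using degX[OF Qnz[of 0]] lcX[OF Qnz[of 0]] degQ lcQ
      by (intro lf_monic[OF smop_Q, symmetric]) auto
    also have "\<dots> = q * uh 1 + uh 2"
      by (subst Q1) (simp add: Q0 q_def lf_pCons numeral_eq_Suc)
    finally show ?thesis .
  qed
  have Kh0: "Kh 0 = uh 0" by (simp add: Kh_def Q0 lf_1)
  have K0: "K 0 = u 0" by (simp add: K_def P0 lf_1)
  have u0: "u 0 = c^2 * uh 0 - 2 * c * uh 1 + uh 2"
  proof -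
    have "u 0 = lf u 1" by (simp add: lf_1)
    also have "\<dots> = lf uh ([:- c, 1:] * [:- c, 1:])" by (metis mult.right_neutral rel' D_def power2_eq_square)
    also have "\<dots> = c^2 * uh 0 - 2 * c * uh 1 + uh 2"
      by (simp add: lf_pCons numeral_eq_Suc power2_eq_square algebra_simps)
    finally show ?thesis .
  qed
  have uh0: "uh 0 \<noteq> 0" using KnzQ[of 0] Kh0 by simp
  have uh1: "uh 1 = - q * uh 0" using orth1 by (simp add: algebra_simps eq_neg_iff_add_eq_0)
  have Delta: "u 0 * uh 0 - (uh 1 - c * uh 0) ^ 2 = Kh 1 * uh 0"
    unfolding u0 Kh1 uh1 by (simp add: power2_eq_square algebra_simps)
  have AH2: "ah 2 = u 0 * uh 0 * \<alpha> 2 0 / (u 0 * uh 0 - (uh 1 - c * uh 0) ^ 2)"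
    unfolding Delta using ahK[of 2] Kh2[of 2] K0 uh0 by simp
  have AH1: "ah 1 = (u 0 * uh 0 - (uh 1 - c * uh 0) ^ 2) / (uh 0) ^ 2"
    unfolding Delta using ahK[of 1] Kh0 uh0 by (simp add: power2_eq_square)
  show ?thesis
    using A0 A2 recQ BH AH3 AH2 AH1 by blast
qed

end
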